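(* Let $m\ge2$ and $n\ge1$ be integers, let $f_i:\mathbb{R}^n\to\mathbb{R}$, $i=1,\dots,m$, be lower semicontinuous, proper and strictly convex, and let $a\ge 0$ and $\mathcal{Z}=\{\mathbf{z}\in\mathbb{R}^n\mid\|\mathbf{z}\|_\infty\le a\}$. Set $\mathcal{Y}=\mathcal{Z}^m\subseteq\mathbb{R}^{nm}$, $f_0(\mathbf{y})=\frac1m\sum_{i=1}^m f_i(\mathbf{y}_i)$ for $\mathbf{y}=[\mathbf{y}_1^{\mathsf T}\ \cdots\ \mathbf{y}_m^{\mathsf T}]^{\mathsf T}$, and $f=f_0+\delta_{\mathcal{Y}}$. Assume that for every $\bar{\mathbf{y}}\in\operatorname{bnd}\mathcal{Y}$ there exist a sequence $(\mathbf{y}_k)$ in $\mathcal{Y}$ with $\mathbf{y}_k\to\bar{\mathbf{y}}$ and subgradients $\boldsymbol{\nu}_k\in\partial f(\mathbf{y}_k)$ with $\limsup_k\|\boldsymbol{\nu}_k\|_2<\infty$. Let $\mathbf{A}\in\mathbb{R}^{n(m-1)\times nm}$ be the block matrix whose $i$-th block row ($i=1,\dots,m-1$) has $\mathbf{I}_n$ in block column $i$, $-\mathbf{I}_n$ in block column $i+1$, and zeros elsewhere. Let $\bar{\mathbf{y}}=[\bar{\mathbf{y}}_1^{\mathsf T}\ \cdots\ \bar{\mathbf{y}}_m^{\mathsf T}]^{\mathsf T}$ with $\bar{\mathbf{y}}_i=a\mathbf{1}_n$ for $i$ odd and $\bar{\mathbf{y}}_i=-a\mathbf{1}_n$ for $i$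 even, and let $\beta>0$. Then there exist $\boldsymbol{\eta}\in\mathbb{R}^{nm}$ and $\boldsymbol{\mu}\in\mathbb{R}^{n(m-1)}$ satisfying $$\mathbf{A}\bar{\mathbf{y}}=\beta(\mathbf{A}\mathbf{A}^{\mathsf T})^{-1}\mathbf{A}\boldsymbol{\eta},\qquad \boldsymbol{\eta}\in N_{\mathcal{Y}}(\bar{\mathbf{y}}),\qquad \mathbf{A}^{\mathsf T}\boldsymbol{\mu}=\boldsymbol{\eta}.$$
   Context: $\delta_{\mathcal{Y}}$ is the indicator function of $\mathcal{Y}$, $\partial$ the convex subdifferential, $N_{\mathcal{Y}}(\bar{\mathbf{y}})$ the normal cone of the convex set $\mathcal{Y}$ at $\bar{\mathbf{y}}$, $\mathbf{1}_n$ the all-ones vector in $\mathbb{R}^n$, $\mathbf{I}_n$ the identity. (This is the feasibility problem associated with the consensus problem: minimize $f_0(\mathbf{y})$ subject to $\mathbf{y}_i\in\mathcal{Z}$ for all $i$ and $\mathbf{A}\mathbf{y}=\mathbf{0}$.) *)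

theory Defs
  imports "Jordan_Normal_Form.Gauss_Jordan_Elimination" "HOL-Library.Extended_Real"
begin

text \<open>Vectors of R^d are represented as JNF vectors in carrier_vec d.\<close>

definition enorm :: "real vec \<Rightarrow> real" where
  "enorm v = sqrt (\<Sum>i<dim_vec v. (v $ i)^2)"

definition lsc_vec :: "nat \<Rightarrow> (real vec \<Rightarrow> real) \<Rightarrow> bool" where
  "lsc_vec d g \<longleftrightarrow> (\<forall>x\<in>carrier_vec d. \<forall>c. c < g x \<longrightarrow>
      (\<exists>\<delta>>0. \<forall>y\<in>carrier_vec d. enorm (y - x) < \<delta> \<longrightarrow> c < g y))"

definition strictly_convex_vec :: "nat \<Rightarrow> (real vec \<Rightarrow> real) \<Rightarrow> bool" where
  "strictly_convex_vec d g \<longleftrightarrow> (\<forall>x\<in>carrier_vec d. \<forall>y\<in>carrier_vec d. x \<noteq> y \<longrightarrow>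
      (\<forall>t::real. 0 < t \<and> t < 1 \<longrightarrow>
        g (t \<cdot>\<^sub>v x + (1 - t) \<cdot>\<^sub>v y) < t * g x + (1 - t) * g y))"

definition proper_vec :: "nat \<Rightarrow> (real vec \<Rightarrow> ereal) \<Rightarrow> bool" where
  "proper_vec d g \<longleftrightarrow> (\<forall>x\<in>carrier_vec d. g x \<noteq> -\<infinity>) \<and> (\<exists>x\<in>carrier_vec d. g x \<noteq> \<infinity>)"

definition Zbox :: "nat \<Rightarrow> real \<Rightarrow> real vec set" where
  "Zbox n a = {z \<in> carrier_vec n. (\<forall>j<n. \<bar>z $ j\<bar> \<le> a)}"

text \<open>The i-th block (i = 1..m) of y in R^(nm).\<close>
definition blk :: "nat \<Rightarrow> real vec \<Rightarrow> nat \<Rightarrow> real vec" where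
  "blk n y i = vec n (\<lambda>j. y $ ((i - 1) * n + j))"

definition Yset :: "nat \<Rightarrow> nat \<Rightarrow> real \<Rightarrow> real vec set" where
  "Yset n m a = {y \<in> carrier_vec (n * m). \<forall>i\<in>{1..m}. blk n y i \<in> Zbox n a}"

definition f0 :: "nat \<Rightarrow> nat \<Rightarrow> (nat \<Rightarrow> real vec \<Rightarrow> real) \<Rightarrow> real vec \<Rightarrow> real" where
  "f0 n m fs y = (1 / real m) * (\<Sum>i\<in>{1..m}. fs i (blk n y i))"

definition indic :: "'a set \<Rightarrow> 'a \<Rightarrow> ereal" where
  "indic C x = (if x \<in> C then 0 else \<infinity>)"

definition subdiff :: "nat \<Rightarrow> (real vec \<Rightarrow> ereal) \<Rightarrow> real vec \<Rightarrow> real vec set" where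
  "subdiff d g x = {\<nu> \<in> carrier_vec d. x \<in> carrier_vec d \<and> \<bar>g x\<bar> \<noteq> \<infinity> \<and>
      (\<forall>z\<in>carrier_vec d. g z \<ge> g x + ereal (\<nu> \<bullet> (z - x)))}"

definition normal_cone :: "nat \<Rightarrow> real vec set \<Rightarrow> real vec \<Rightarrow> real vec set" where
  "normal_cone d C x = (if x \<in> C then {\<eta> \<in> carrier_vec d. \<forall>y\<in>C. \<eta> \<bullet> (y - x) \<le> 0} else {})"

definition bnd :: "nat \<Rightarrow> real vec set \<Rightarrow> real vec set" where
  "bnd d C = {x \<in> carrier_vec d. \<forall>e>0.
      (\<exists>y\<in>C. enorm (y - x) < e) \<and> (\<exists>y\<in>carrier_vec d - C. enorm (y - x) < e)}"

definition Amat :: "nat \<Rightarrow> nat \<Rightarrow> real mat" where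
  "Amat n m = mat (n * (m - 1)) (n * m)
     (\<lambda>(r, c). if c = r then 1 else if c = r + n then -1 else 0)"

text \<open>ybar: block i is a*1 for odd i, -a*1 for even i (i = 1..m).\<close>
definition ybar :: "nat \<Rightarrow> nat \<Rightarrow> real \<Rightarrow> real vec" where
  "ybar n m a = vec (n * m) (\<lambda>k. if odd (k div n + 1) then a else - a)"

end

theory Submission imports Defs "Jordan_Normal_Form.Determinant" begin

lemma scal_transp:
  fixes A :: "real mat"
  assumes A: "A \<in> carrier_mat p q" and v: "v \<in> carrier_vec p" and w: "w \<in> carrier_vec q"
  shows "v \<bullet> (A *\<^sub>v w) = (transpose_mat A *\<^sub>v v) \<bullet> w"
proof -
  have "v \<bullet> (A *\<^sub>v w) = (\<Sum>i<p. v $ i * (\<Sum>j<q. A $$ (i,j) * w $ j))"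
    using A v w by (simp add: scalar_prod_def mult_mat_vec_def row_def atLeast0LessThan)
  also have "\<dots> = (\<Sum>j<q. (\<Sum>i<p. A $$ (i,j) * v $ i) * w $ j)"
    by (simp add: sum_distrib_left sum_distrib_right mult_ac sum.swap[of _ "{..<p}"])
  also have "\<dots> = (transpose_mat A *\<^sub>v v) \<bullet> w"
    using A v w by (simp add: scalar_prod_def mult_mat_vec_def row_def col_def atLeast0LessThan)
  finally show ?thesis .
qed

lemma Amat_mult:
  assumes n: "n \<ge> 1" and x: "x \<in> carrier_vec (n*m)" and r: "r < n*(m-1)"
  shows "(Amat n m *\<^sub>v x) $ r = x $ r - x $ (r+n)"
proof -
  have rn: "r + n < n*m" using r n by (cases m) (auto simp: algebra_simps)
  have "(Amat n m *\<^sub>v x) $ r = (\<Sum>c<n*m. (if c = r then 1 else if c = r + n then -1 else 0) * x $ c)"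
    using r x by (simp add: Amat_def scalar_prod_def row_def atLeast0LessThan)
  also have "\<dots> = (\<Sum>c<n*m. (if c = r then x $ c else 0) + (if c = r + n then - x $ c else 0))"
    using n by (intro sum.cong) auto
  also have "\<dots> = x $ r - x $ (r+n)"
    using rn by (simp add: sum.distrib)
  finally show ?thesis .
qed

lemma AmatT_mult:
  assumes n: "n \<ge> 1" and v: "v \<in> carrier_vec (n*(m-1))" and c: "c < n*m"
  shows "(transpose_mat (Amat n m) *\<^sub>v v) $ c =
     (if c < n*(m-1) then v $ c else 0) - (if n \<le> c then v $ (c-n) else 0)"
proof -
  have cn: "n \<le> c \<Longrightarrow> c - n < n*(m-1)" using c n by (cases m) (auto simp: algebra_simps)
  have "(transpose_mat (Amat n m) *\<^sub>v v) $ c = (\<Sum>r<n*(m-1). (if c = r then 1 else if c = r + n then -1 else 0) * v $ r)"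
    using c v by (simp add: Amat_def scalar_prod_def row_def col_def atLeast0LessThan)
  also have "\<dots> = (\<Sum>r<n*(m-1). (if r = c then v $ r else 0) + (if r = c - n \<and> n \<le> c then - v $ r else 0))"
    using n by (intro sum.cong) auto
  also have "\<dots> = (if c < n*(m-1) then v $ c else 0) - (if n \<le> c then v $ (c-n) else 0)"
    using cn by (simp add: sum.distrib sum.delta' cong: if_cong)
  finally show ?thesis .
qed

lemma M_inv:
  assumes n: "n \<ge> 1"
  obtains B where "mat_inverse (Amat n m * transpose_mat (Amat n m)) = Some B"
    "B * (Amat n m * transpose_mat (Amat n m)) = 1\<^sub>m (n*(m-1))"
proof -
  let ?A = "Amat n m" let ?N = "n*(m-1)"
  have A: "?A \<in> carrier_mat ?N (n*m)" by (simp add: Amat_def)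
  have M: "?A * transpose_mat ?A \<in> carrier_mat ?N ?N" using A by auto
  have inj: "v = 0\<^sub>v ?N" if v: "v \<in> carrier_vec ?N" and Mv: "(?A * transpose_mat ?A) *\<^sub>v v = 0\<^sub>v ?N" for v
  proof -
    define w where "w = transpose_mat ?A *\<^sub>v v"
    have w: "w \<in> carrier_vec (n*m)" unfolding w_def by (rule mult_mat_vec_carrier[OF transpose_carrier_mat[THEN iffD2, OF A] v])
    have Aw: "?A *\<^sub>v w = 0\<^sub>v ?N" unfolding w_def using assoc_mult_mat_vec[OF A transpose_carrier_mat[THEN iffD2, OF A] v] Mv by (simp only:)
    have "w \<bullet> w = v \<bullet> (?A *\<^sub>v w)" using scal_transp[OF A v w] w_def by simp
    also have "\<dots> = 0" using Aw v by (simp only: scalar_prod_right_zero)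
    finally have "(\<Sum>c<n*m. (w $ c)^2) = 0" using w
      by (simp add: scalar_prod_def atLeast0LessThan power2_eq_square)
    hence w0: "\<And>c. c < n*m \<Longrightarrow> w $ c = 0"
      using sum_nonneg_eq_0_iff[of "{..<n*m}" "\<lambda>c. (w $ c)^2"] by simp
    have "\<forall>c. c < ?N \<longrightarrow> v $ c = 0"
    proof (intro allI)
      fix c show "c < ?N \<longrightarrow> v $ c = 0"
      proof (induction c rule: less_induct)
        case (less c)
        show ?case
        proof
          assume c: "c < ?N"
          have cm: "c < n*m" using c by (metis diff_le_self mult_le_mono2 order_less_le_trans)
          have "w $ c = v $ c - (if n \<le> c then v $ (c-n) else 0)"
            using AmatT_mult[OF n v cm] c w_def by simp
          moreover have "n \<le> c \<longrightarrow> v $ (c-n) = 0" using less c n by auto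
          ultimately show "v $ c = 0" using w0[OF cm] by auto
        qed
      qed
    qed
    thus ?thesis using v by (intro eq_vecI) auto
  qed
  have "det (?A * transpose_mat ?A) \<noteq> 0"
    using det_0_iff_vec_prod_zero[OF M] inj by metis
  from det_non_zero_imp_unit[OF M this]
  have U: "?A * transpose_mat ?A \<in> Units (ring_mat TYPE(real) ?N ?N)" .
  obtain B where B: "mat_inverse (?A * transpose_mat ?A) = Some B"
    using mat_inverse(1)[OF M] U by fastforce
  show ?thesis using that[OF B] mat_inverse(2)[OF M B] by blast
qed


definition sgn_blk :: "nat \<Rightarrow> nat \<Rightarrow> real" where
  "sgn_blk n c = (if even (c div n) then 1 else -1)"

lemma ybar_idx: "c < n*m \<Longrightarrow> ybar n m a $ c = sgn_blk n c * a"
  by (simp add: ybar_def sgn_blk_def)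

lemma sgn_blk_shift: "n \<ge> 1 \<Longrightarrow> sgn_blk n (r + n) = - sgn_blk n r"
  by (simp add: sgn_blk_def)

lemma sgn_blk_sq: "sgn_blk n c * sgn_blk n c = 1"
  by (simp add: sgn_blk_def)

lemma Yset_bound:
  assumes n: "n \<ge> 1" and y: "y \<in> Yset n m a" and c: "c < n*m"
  shows "\<bar>y $ c\<bar> \<le> a"
proof -
  define i where "i = c div n + 1"
  have i: "i \<in> {1..m}" using c n unfolding i_def
    by (simp add: less_mult_imp_div_less mult.commute Suc_leI)
  have j: "c mod n < n" using n by simp
  have "blk n y i \<in> Zbox n a" using y i by (simp add: Yset_def)
  hence "\<bar>blk n y i $ (c mod n)\<bar> \<le> a" using j by (simp add: Zbox_def)
  moreover have "blk n y i $ (c mod n) = y $ c" using j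
    by (simp add: blk_def i_def mult.commute)
  ultimately show ?thesis by simp
qed


theorem lemma2:
  fixes m n :: nat and fs :: "nat \<Rightarrow> real vec \<Rightarrow> real" and a \<beta> :: real
  assumes "m \<ge> 2" and "n \<ge> 1"
    and "\<forall>i\<in>{1..m}. lsc_vec n (fs i) \<and> proper_vec n (\<lambda>x. ereal (fs i x))
                      \<and> strictly_convex_vec n (fs i)"
    and "a \<ge> 0"
    and "\<forall>yb\<in>bnd (n * m) (Yset n m a). \<exists>ys \<nu>s.
           (\<forall>k. ys k \<in> Yset n m a) \<and> (\<lambda>k. enorm (ys k - yb)) \<longlonglongrightarrow> 0 \<and>
           (\<forall>k. \<nu>s k \<in> subdiff (n * m)
                  (\<lambda>y. ereal (f0 n m fs y) + indic (Yset n m a) y) (ys k)) \<and>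
           limsup (\<lambda>k. ereal (enorm (\<nu>s k))) < \<infinity>"
    and "\<beta> > 0"
  shows "\<exists>\<eta> \<mu>. \<eta> \<in> carrier_vec (n * m) \<and> \<mu> \<in> carrier_vec (n * (m - 1)) \<and>
     Amat n m *\<^sub>v ybar n m a =
       \<beta> \<cdot>\<^sub>v (the (mat_inverse (Amat n m * transpose_mat (Amat n m))) *\<^sub>v (Amat n m *\<^sub>v \<eta>)) \<and>
     \<eta> \<in> normal_cone (n * m) (Yset n m a) (ybar n m a) \<and>
     transpose_mat (Amat n m) *\<^sub>v \<mu> = \<eta>"
proof -
  note n = assms(2) and a = assms(4) and b = assms(6)
  let ?A = "Amat n m" let ?N = "n*(m-1)" let ?y = "ybar n m a"
  have A: "?A \<in> carrier_mat ?N (n*m)" by (simp add: Amat_def)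
  have AT: "transpose_mat ?A \<in> carrier_mat (n*m) ?N" using A by simp
  have M: "?A * transpose_mat ?A \<in> carrier_mat ?N ?N" using A by simp
  have yc: "?y \<in> carrier_vec (n*m)" by (simp add: ybar_def)
  obtain B where B: "mat_inverse (?A * transpose_mat ?A) = Some B"
    and BM: "B * (?A * transpose_mat ?A) = 1\<^sub>m ?N" using M_inv[OF n] by blast
  have Bc: "B \<in> carrier_mat ?N ?N" using mat_inverse(2)[OF M B] by blast
  define \<mu> where "\<mu> = (1/\<beta>) \<cdot>\<^sub>v (?A *\<^sub>v ?y)"
  define \<eta> where "\<eta> = transpose_mat ?A *\<^sub>v \<mu>"
  have \<mu>c: "\<mu> \<in> carrier_vec ?N" unfolding \<mu>_def
    by (rule smult_carrier_vec[THEN iffD2], rule mult_mat_vec_carrier[OF A yc])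
  have \<eta>c: "\<eta> \<in> carrier_vec (n*m)" unfolding \<eta>_def by (rule mult_mat_vec_carrier[OF AT \<mu>c])
  have "?A *\<^sub>v \<eta> = (?A * transpose_mat ?A) *\<^sub>v \<mu>"
    unfolding \<eta>_def using assoc_mult_mat_vec[OF A AT \<mu>c] by (simp only:)
  hence "B *\<^sub>v (?A *\<^sub>v \<eta>) = (B * (?A * transpose_mat ?A)) *\<^sub>v \<mu>"
    using assoc_mult_mat_vec[OF Bc M \<mu>c] by (simp only:)
  also have "\<dots> = \<mu>" using BM \<mu>c by simp
  finally have eq1: "B *\<^sub>v (?A *\<^sub>v \<eta>) = \<mu>" .
  have eq2: "\<beta> \<cdot>\<^sub>v \<mu> = ?A *\<^sub>v ?y" unfolding \<mu>_def using b by (simp add: smult_smult_assoc)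
  have \<mu>idx: "\<mu> $ r = (2*a/\<beta>) * sgn_blk n r" if r: "r < ?N" for r
  proof -
    have rn: "r + n < n*m" using r n by (cases m) (auto simp: algebra_simps)
    have rm: "r < n*m" using rn by simp
    have "\<mu> $ r = (1/\<beta>) * (?y $ r - ?y $ (r+n))"
      unfolding \<mu>_def using r A Amat_mult[OF n yc r] by simp
    also have "\<dots> = (2*a/\<beta>) * sgn_blk n r"
    proof -
      have "?y $ (r+n) = - sgn_blk n r * a" using ybar_idx[OF rn] sgn_blk_shift[OF n, of r] by simp
      thus ?thesis using ybar_idx[OF rm] by (simp add: field_simps)
    qed
    finally show ?thesis .
  qed
  have \<eta>idx: "\<eta> $ c = (2*a/\<beta>) * sgn_blk n c * ((if c < ?N then 1 else 0) + (if n \<le> c then 1 else 0))"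
    if c: "c < n*m" for c
  proof -
    have cn: "n \<le> c \<Longrightarrow> c - n < ?N" using c n by (cases m) (auto simp: algebra_simps)
    have sh: "n \<le> c \<Longrightarrow> sgn_blk n (c - n) = - sgn_blk n c"
      using sgn_blk_shift[OF n, of "c-n"] by simp
    show ?thesis unfolding \<eta>_def using AmatT_mult[OF n \<mu>c c] \<mu>idx cn sh
      by (auto simp: algebra_simps)
  qed
  have idx: "(i - 1) * n + j < n * m" if "1 \<le> i" "i \<le> m" "j < n" for i j
  proof -
    have "(i - 1) * n + j < (i - 1) * n + n" using that by simp
    also have "\<dots> = i * n" using that by (cases i) auto
    also have "\<dots> \<le> m * n" using that by simp
    finally show ?thesis by (simp add: mult.commute)
  qed
  have yY: "?y \<in> Yset n m a"
    unfolding Yset_def Zbox_def using yc a idx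
    by (auto simp: blk_def ybar_def)
  have nc: "\<eta> \<in> normal_cone (n * m) (Yset n m a) ?y"
    unfolding normal_cone_def
  proof (simp add: yY \<eta>c, intro ballI)
    fix y assume y: "y \<in> Yset n m a"
    have ycar: "y \<in> carrier_vec (n*m)" using y by (simp add: Yset_def)
    have "\<eta> \<bullet> (y - ?y) = (\<Sum>c<n*m. \<eta> $ c * (y $ c - ?y $ c))"
      using ycar yc \<eta>c by (simp add: scalar_prod_def atLeast0LessThan)
    also have "\<dots> \<le> 0"
    proof (rule sum_nonpos)
      fix c assume "c \<in> {..<n*m}" hence c: "c < n*m" by simp
      define t where "t = (2*a/\<beta>) * ((if c < ?N then 1 else 0) + (if n \<le> c then 1 else 0))"
      have t: "t \<ge> 0" unfolding t_def using a b by simp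
      have "\<eta> $ c * (y $ c - ?y $ c) = t * (sgn_blk n c * y $ c - a)"
        using \<eta>idx[OF c] ybar_idx[OF c] sgn_blk_sq[of n c] unfolding t_def
        by (simp add: algebra_simps)
      moreover have "sgn_blk n c * y $ c \<le> a"
        using Yset_bound[OF n y c] by (auto simp: sgn_blk_def)
      ultimately show "\<eta> $ c * (y $ c - ?y $ c) \<le> 0"
        using t by (simp add: mult_nonneg_nonpos)
    qed
    finally show "\<eta> \<bullet> (y - ?y) \<le> 0" .
  qed
  show ?thesis
    apply (rule exI[of _ \<eta>], rule exI[of _ \<mu>])
    using \<eta>c \<mu>c B eq1 eq2 nc \<eta>_def by simp
qed

end
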